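(* The group $\mathrm{GL}_n(\mathbb C)\times\mathrm{GL}_n(\mathbb C)$ has $2^{n-1}$ orbits on $\mathrm{Hinge}_n$. These orbits are enumerated by the number $k\in\{1,\dots,n\}$ of terms and the positive integers $\alpha_1=\mathrm{rk}\,P_1,\dots,\alpha_k=\mathrm{rk}\,P_k$, where $\alpha_1+\dots+\alpha_k=n$: two hinges lie in the same orbit iff these data coincide, and every such tuple $(\alpha_1,\dots,\alpha_k)$ occurs.
   Context: Let $V=\mathbb C^n$. For a linear subspace (linear relation) $P\subset V\oplus V$: $\mathrm{Ker}\,P=\{v: v\oplus0\in P\}$, $\mathrm{Dom}\,P$ and $\mathrm{Im}\,P$ are the projections of $P$ to the first and second summands, $\mathrm{Indef}\,P=\{w:0\oplus w\in P\}$, $\mathrm{rk}\,P=\dim\mathrm{Dom}\,P-\dim\mathrm{Ker}\,P$. A hinge is a sequence $(P_1,\dots,P_k)$ of $n$-dimensional subspaces of $V\oplus V$ such that $\mathrm{Ker}\,P_j=\mathrm{Dom}\,P_{j+1}$ and $\mathrm{Im}\,P_j=\mathrm{Indef}\,P_{j+1}$ for $1\le j\le k-1$, $\mathrm{Dom}\,P_1=V$, $\mathrm{Im}\,P_k=V$, and $\mathrm{rk}\,P_j>0$ for all $j$. $\mathrm{Hinge}_n$ is the set of all hinges. $(g_1,g_2)\in\mathrm{GL}_n(\mathbb C)\times\mathrm{GL}_n(\mathbb C)$ acts on $V\oplus V$ by $v\oplus w\mapsto g_1v\oplus g_2w$, and on hinges termwise. *)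

theory Defs
  imports "HOL-Analysis.Analysis"
begin

text \<open>V = complex^'n (so n = CARD('n)); V \<oplus> V is modelled as the product type,
  with componentwise complex scalar multiplication.\<close>

type_synonym 'n cvec = "complex ^ 'n"

definition pscale :: "complex \<Rightarrow> 'n::finite cvec \<times> 'n cvec \<Rightarrow> 'n cvec \<times> 'n cvec" where
  "pscale c p = (c *s fst p, c *s snd p)"

interpretation pv: vector_space "pscale :: complex \<Rightarrow> 'n::finite cvec \<times> 'n cvec \<Rightarrow> _"
  by unfold_locales
     (auto simp: pscale_def vector_space_over_itself.scale_right_distrib
       vec.scale_right_distrib vec.scale_left_distrib vec.scale_scale)

definition KerR :: "('n::finite cvec \<times> 'n cvec) set \<Rightarrow> 'n cvec set" where
  "KerR P = {v. (v, 0) \<in> P}"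

definition DomR :: "('n::finite cvec \<times> 'n cvec) set \<Rightarrow> 'n cvec set" where
  "DomR P = fst ` P"

definition ImR :: "('n::finite cvec \<times> 'n cvec) set \<Rightarrow> 'n cvec set" where
  "ImR P = snd ` P"

definition IndefR :: "('n::finite cvec \<times> 'n cvec) set \<Rightarrow> 'n cvec set" where
  "IndefR P = {w. (0, w) \<in> P}"

definition rkR :: "('n::finite cvec \<times> 'n cvec) set \<Rightarrow> nat" where
  "rkR P = vec.dim (DomR P) - vec.dim (KerR P)"

definition ndim_subspace :: "('n::finite cvec \<times> 'n cvec) set \<Rightarrow> bool" where
  "ndim_subspace P \<longleftrightarrow> pv.subspace P \<and> pv.dim P = CARD('n)"

definition is_hinge :: "('n::finite cvec \<times> 'n cvec) set list \<Rightarrow> bool" where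
  "is_hinge Ps \<longleftrightarrow> Ps \<noteq> [] \<and>
     (\<forall>j < length Ps. ndim_subspace (Ps ! j)) \<and>
     (\<forall>j. j + 1 < length Ps \<longrightarrow> KerR (Ps ! j) = DomR (Ps ! (j+1))
                              \<and> ImR (Ps ! j) = IndefR (Ps ! (j+1))) \<and>
     DomR (hd Ps) = UNIV \<and> ImR (last Ps) = UNIV \<and>
     (\<forall>j < length Ps. rkR (Ps ! j) > 0)"

definition Hinge :: "('n::finite cvec \<times> 'n cvec) set list set" where
  "Hinge = {Ps. is_hinge Ps}"

definition act :: "complex^'n^'n \<Rightarrow> complex^'n^'n \<Rightarrow> ('n::finite cvec \<times> 'n cvec) set
    \<Rightarrow> ('n::finite cvec \<times> 'n cvec) set" where
  "act g1 g2 P = (\<lambda>(v, w). (g1 *v v, g2 *v w)) ` P"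

definition hinge_orbit :: "('n::finite cvec \<times> 'n cvec) set list \<Rightarrow> ('n cvec \<times> 'n cvec) set list set" where
  "hinge_orbit Ps = {map (act g1 g2) Ps | g1 g2. invertible g1 \<and> invertible g2}"

end

theory Submission
  imports Defs
begin


lemma pair00[simp]: "(0, 0) = (0 :: 'a::zero \<times> 'b::zero)"
  by (simp add: zero_prod_def)

lemma pscale_pair[simp]: "pscale c (a, b) = (c *s a, c *s b)"
  by (simp add: pscale_def)

lemma sub_zero: "pv.subspace P \<Longrightarrow> (0, 0) \<in> P"
  using pv.subspace_0 by (metis zero_prod_def)

lemma sub_add: "pv.subspace P \<Longrightarrow> (a, b) \<in> P \<Longrightarrow> (c, d) \<in> P \<Longrightarrow> (a + c, b + d) \<in> P"
  using pv.subspace_add by fastforce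

lemma sub_scale: "pv.subspace P \<Longrightarrow> (a, b) \<in> P \<Longrightarrow> (r *s a, r *s b) \<in> P"
  using pv.subspace_scale[of P "(a,b)" r] by simp

lemma sub_diff: "pv.subspace P \<Longrightarrow> (a, b) \<in> P \<Longrightarrow> (c, d) \<in> P \<Longrightarrow> (a - c, b - d) \<in> P"
  using pv.subspace_diff by fastforce

lemma lift_span:
  assumes P: "pv.subspace P" and X: "\<forall>x\<in>X. \<exists>z\<in>vec.span Z. (x, z) \<in> P"
    and x: "x \<in> vec.span X"
  shows "\<exists>z\<in>vec.span Z. (x, z) \<in> P"
proof -
  have "vec.subspace {x. \<exists>z\<in>vec.span Z. (x, z) \<in> P}"
    unfolding vec.subspace_def
  proof (intro conjI ballI allI)
    show "0 \<in> {x. \<exists>z\<in>vec.span Z. (x, z) \<in> P}" using sub_zero[OF P] vec.span_zero by blast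
  next
    fix x y assume "x \<in> {x. \<exists>z\<in>vec.span Z. (x, z) \<in> P}" "y \<in> {x. \<exists>z\<in>vec.span Z. (x, z) \<in> P}"
    then show "x + y \<in> {x. \<exists>z\<in>vec.span Z. (x, z) \<in> P}"
      using sub_add[OF P] vec.span_add by blast
  next
    fix c x assume "x \<in> {x. \<exists>z\<in>vec.span Z. (x, z) \<in> P}"
    then show "c *s x \<in> {x. \<exists>z\<in>vec.span Z. (x, z) \<in> P}"
      using sub_scale[OF P] vec.span_scale by blast
  qed
  then show ?thesis using vec.span_induct[OF x, of "\<lambda>x. \<exists>z\<in>vec.span Z. (x, z) \<in> P"] X by auto
qed

lemma lift_span2:
  assumes P: "pv.subspace P" and C: "\<forall>c\<in>C. (0, c) \<in> P" and u: "u \<in> vec.span C"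
  shows "(0, u) \<in> P"
proof -
  have "vec.subspace {u. (0, u) \<in> P}"
    unfolding vec.subspace_def
    using sub_zero[OF P] sub_add[OF P, of 0 _ 0] sub_scale[OF P, of 0] by auto
  then show ?thesis using vec.span_induct[OF u, of "\<lambda>u. (0, u) \<in> P"] C by auto
qed

lemma dim_formula:
  assumes P: "pv.subspace P"
  shows "pv.dim P = vec.dim (DomR P) + vec.dim (IndefR P)"
proof -
  obtain B where B: "B \<subseteq> DomR P" "vec.independent B" "DomR P \<subseteq> vec.span B" "card B = vec.dim (DomR P)"
    by (rule vec.basis_exists)
  obtain C where C: "C \<subseteq> IndefR P" "vec.independent C" "IndefR P \<subseteq> vec.span C" "card C = vec.dim (IndefR P)"
    by (rule vec.basis_exists)
  have fB: "finite B" using B(2) vec.finiteI_independent by blast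
  have fC: "finite C" using C(2) vec.finiteI_independent by blast
  have "\<forall>b\<in>B. \<exists>w. (b, w) \<in> P" using B(1) unfolding DomR_def by force
  then obtain w where w: "\<forall>b\<in>B. (b, w b) \<in> P" by metis
  define L where "L = (\<lambda>b. (b, w b)) ` B"
  define M where "M = (\<lambda>c. (0::'a cvec, c)) ` C"
  have B0: "0 \<notin> B" using B(2) vec.dependent_zero by blast
  have disj: "L \<inter> M = {}" using B0 by (auto simp: L_def M_def)
  have injL: "inj_on (\<lambda>b. (b, w b)) B" by (auto simp: inj_on_def)
  have injM: "inj_on (\<lambda>c. (0::'a cvec, c)) C" by (auto simp: inj_on_def)
  have fL: "finite L" using fB by (simp add: L_def)
  have fM: "finite M" using fC by (simp add: M_def)
  have card: "card (L \<union> M) = card B + card C"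
    using card_Un_disjoint[OF fL fM disj] card_image[OF injL] card_image[OF injM]
    by (simp add: L_def M_def)
  have sub: "L \<union> M \<subseteq> P" using w C(1) by (auto simp: L_def M_def IndefR_def)
  have span: "P \<subseteq> pv.span (L \<union> M)"
  proof
    fix p assume p: "p \<in> P"
    obtain v x where vx: "p = (v, x)" by (cases p)
    have "v \<in> vec.span B" using B(3) p vx by (force simp: DomR_def)
    moreover have "\<forall>b\<in>B. \<exists>z\<in>vec.span UNIV. (b, z) \<in> pv.span (L \<union> M)"
      by (auto simp: L_def intro!: pv.span_base)
    ultimately obtain y where y: "(v, y) \<in> pv.span (L \<union> M)"
      using lift_span[OF pv.subspace_span] by blast
    have "pv.span (L \<union> M) \<subseteq> P" using pv.span_minimal[OF sub] P by blast
    then have "(v, y) \<in> P" using y by blast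
    then have "(v - v, x - y) \<in> P" using sub_diff[OF P] p vx by blast
    then have "x - y \<in> vec.span C" using C(3) by (auto simp: IndefR_def)
    moreover have "\<forall>c\<in>C. (0, c) \<in> pv.span (L \<union> M)"
      by (auto simp: M_def intro!: pv.span_base)
    ultimately have "(0, x - y) \<in> pv.span (L \<union> M)"
      using lift_span2[OF pv.subspace_span] by blast
    from pv.span_add[OF y this] show "p \<in> pv.span (L \<union> M)" using vx by simp
  qed
  have indep: "pv.independent (L \<union> M)"
  proof (rule pv.independent_if_scalars_zero)
    show "finite (L \<union> M)" using fL fM by simp
  next
    fix f x assume s: "(\<Sum>x\<in>L \<union> M. pscale (f x) x) = 0" and x: "x \<in> L \<union> M"
    have s2: "(\<Sum>x\<in>L. pscale (f x) x) + (\<Sum>x\<in>M. pscale (f x) x) = 0"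
      using s sum.union_disjoint[OF fL fM disj, of "\<lambda>x. pscale (f x) x"] by simp
    have m1: "fst (\<Sum>x\<in>M. pscale (f x) x) = 0"
      by (auto simp: fst_sum M_def sum.reindex[OF injM] intro!: sum.neutral)
    have l1: "fst (\<Sum>x\<in>L. pscale (f x) x) = (\<Sum>b\<in>B. f (b, w b) *s b)"
      by (simp add: L_def fst_sum sum.reindex[OF injL])
    have "(\<Sum>b\<in>B. f (b, w b) *s b) = 0"
      using arg_cong[OF s2, of fst] m1 l1 by simp
    then have hL: "\<forall>b\<in>B. f (b, w b) = 0"
      using vec.independentD[OF B(2) fB subset_refl, of "\<lambda>b. f (b, w b)"] by blast
    then have "(\<Sum>x\<in>L. pscale (f x) x) = 0"
      by (auto simp: L_def sum.reindex[OF injL] intro!: sum.neutral)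
    then have sM: "(\<Sum>x\<in>M. pscale (f x) x) = 0" using s2 by simp
    have "(\<Sum>c\<in>C. f (0, c) *s c) = 0"
      using arg_cong[of _ _ snd, OF sM] by (simp add: M_def snd_sum sum.reindex[OF injM])
    then have hM: "\<forall>c\<in>C. f (0, c) = 0"
      using vec.independentD[OF C(2) fC subset_refl, of "\<lambda>c. f (0, c)"] by blast
    show "f x = 0" using x hL hM by (auto simp: L_def M_def)
  qed
  have "card (L \<union> M) = pv.dim P"
    using pv.basis_card_eq_dim[OF sub span indep] .
  then show ?thesis using card B(4) C(4) by simp
qed



lemma swap_hom: "module_hom pscale pscale (prod.swap :: 'n::finite cvec \<times> 'n cvec \<Rightarrow> _)"
  by (auto simp: module_hom_iff pv.module_axioms pscale_def)

lemma dim_formula2: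
  assumes P: "pv.subspace (P :: ('n::finite cvec \<times> 'n cvec) set)"
  shows "pv.dim P = vec.dim (ImR P) + vec.dim (KerR P)"
proof -
  interpret sw: module_hom pscale pscale "prod.swap :: 'n::finite cvec \<times> 'n cvec \<Rightarrow> _"
    by (rule swap_hom)
  let ?S = "prod.swap ` P"
  have S: "pv.subspace ?S" using sw.subspace_image[OF P] .
  have "DomR ?S = ImR P" "IndefR ?S = KerR P"
    by (force simp: DomR_def ImR_def IndefR_def KerR_def)+
  then have d1: "pv.dim ?S = vec.dim (ImR P) + vec.dim (KerR P)" using dim_formula[OF S] by simp
  obtain B where B: "B \<subseteq> P" "pv.independent B" "P \<subseteq> pv.span B" "card B = pv.dim P"
    by (rule pv.basis_exists)
  have "card (prod.swap ` B) = pv.dim ?S"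
  proof (rule pv.basis_card_eq_dim)
    show "prod.swap ` B \<subseteq> ?S" using B(1) by blast
    show "?S \<subseteq> pv.span (prod.swap ` B)" using B(3) sw.span_image by blast
    show "pv.independent (prod.swap ` B)" using sw.independent_inj_image[OF B(2)] by simp
  qed
  moreover have "card (prod.swap ` B) = card B" by (simp add: card_image)
  ultimately show ?thesis using d1 B(4) by simp
qed

lemma subspace_Dom:
  assumes P: "pv.subspace P" shows "vec.subspace (DomR P)"
  unfolding vec.subspace_def DomR_def
proof (intro conjI ballI allI)
  show "0 \<in> fst ` P" using sub_zero[OF P] by (rule image_eqI[rotated]) simp
next
  fix x y assume "x \<in> fst ` P" "y \<in> fst ` P"
  then obtain x' y' where "(x, x') \<in> P" "(y, y') \<in> P" by (metis prod.collapse imageE)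
  from sub_add[OF P this] show "x + y \<in> fst ` P" by (rule image_eqI[rotated]) simp
next
  fix c x assume "x \<in> fst ` P"
  then obtain x' where "(x, x') \<in> P" by (metis prod.collapse imageE)
  from sub_scale[OF P this, of c] show "c *s x \<in> fst ` P" by (rule image_eqI[rotated]) simp
qed

lemma subspace_Im:
  assumes P: "pv.subspace P" shows "vec.subspace (ImR P)"
  unfolding vec.subspace_def ImR_def
proof (intro conjI ballI allI)
  show "0 \<in> snd ` P" using sub_zero[OF P] by (rule image_eqI[rotated]) simp
next
  fix x y assume "x \<in> snd ` P" "y \<in> snd ` P"
  then obtain x' y' where "(x', x) \<in> P" "(y', y) \<in> P" by (metis prod.collapse imageE)
  from sub_add[OF P this] show "x + y \<in> snd ` P" by (rule image_eqI[rotated]) simp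
next
  fix c x assume "x \<in> snd ` P"
  then obtain x' where "(x', x) \<in> P" by (metis prod.collapse imageE)
  from sub_scale[OF P this, of c] show "c *s x \<in> snd ` P" by (rule image_eqI[rotated]) simp
qed

lemma subspace_Ker:
  assumes P: "pv.subspace P" shows "vec.subspace (KerR P)"
  unfolding vec.subspace_def KerR_def
proof (intro conjI ballI allI)
  show "0 \<in> {v. (v, 0) \<in> P}" using sub_zero[OF P] by simp
next
  fix x y assume "x \<in> {v. (v, 0) \<in> P}" "y \<in> {v. (v, 0) \<in> P}"
  then have "(x, 0) \<in> P" "(y, 0) \<in> P" by simp_all
  from sub_add[OF P this] show "x + y \<in> {v. (v, 0) \<in> P}" by simp
next
  fix c x assume "x \<in> {v. (v, 0) \<in> P}"
  then have "(x, 0) \<in> P" by simp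
  from sub_scale[OF P this, of c] show "c *s x \<in> {v. (v, 0) \<in> P}" by simp
qed

lemma subspace_Indef:
  assumes P: "pv.subspace P" shows "vec.subspace (IndefR P)"
  unfolding vec.subspace_def IndefR_def
proof (intro conjI ballI allI)
  show "0 \<in> {w. (0, w) \<in> P}" using sub_zero[OF P] by simp
next
  fix x y assume "x \<in> {w. (0, w) \<in> P}" "y \<in> {w. (0, w) \<in> P}"
  then have "(0, x) \<in> P" "(0, y) \<in> P" by simp_all
  from sub_add[OF P this] show "x + y \<in> {w. (0, w) \<in> P}" by simp
next
  fix c x assume "x \<in> {w. (0, w) \<in> P}"
  then have "(0, x) \<in> P" by simp
  from sub_scale[OF P this, of c] show "c *s x \<in> {w. (0, w) \<in> P}" by simp
qed

lemma Ker_sub_Dom: "KerR P \<subseteq> DomR P"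
  by (force simp: KerR_def DomR_def)

lemma Indef_sub_Im: "IndefR P \<subseteq> ImR P"
  by (force simp: IndefR_def ImR_def)

lemma vec_dim_eq_0: "vec.subspace S \<Longrightarrow> vec.dim S = 0 \<Longrightarrow> S = {0}"
  using vec.dim_eq_0[of S] vec.subspace_0[of S] by auto

lemma Indef_zero:
  assumes "ndim_subspace (P :: ('n::finite cvec \<times> 'n cvec) set)" "DomR P = UNIV"
  shows "IndefR P = {0}"
proof -
  have "pv.dim P = CARD('n) + vec.dim (IndefR P)"
    using dim_formula[of P] assms by (simp add: ndim_subspace_def vec.dim_UNIV card_cart_basis)
  then have "vec.dim (IndefR P) = 0" using assms(1) by (simp add: ndim_subspace_def)
  then show ?thesis using vec_dim_eq_0 subspace_Indef assms(1) ndim_subspace_def by blast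
qed

lemma Ker_zero:
  assumes "ndim_subspace (P :: ('n::finite cvec \<times> 'n cvec) set)" "ImR P = UNIV"
  shows "KerR P = {0}"
proof -
  have "pv.dim P = CARD('n) + vec.dim (KerR P)"
    using dim_formula2[of P] assms by (simp add: ndim_subspace_def vec.dim_UNIV card_cart_basis)
  then have "vec.dim (KerR P) = 0" using assms(1) by (simp add: ndim_subspace_def)
  then show ?thesis using vec_dim_eq_0 subspace_Ker assms(1) ndim_subspace_def by blast
qed



definition coord :: "('n::finite \<Rightarrow> bool) \<Rightarrow> 'n cvec set" where
  "coord Q = {v. \<forall>i. Q i \<longrightarrow> v $ i = 0}"

lemma card_split: "card {i::'n::finite. Q i} + card {i. \<not> Q i} = CARD('n)"
proof -
  have "card ({i. Q i} \<union> {i. \<not> Q i}) = card {i. Q i} + card {i. \<not> Q i}"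
    by (rule card_Un_disjoint) auto
  moreover have "{i. Q i} \<union> {i. \<not> Q i} = UNIV" by auto
  ultimately show ?thesis by simp
qed

lemma dim_coord: "vec.dim (coord Q :: 'n::finite cvec set) = card {i. \<not> Q i}"
proof -
  let ?B = "(\<lambda>i. axis i (1::complex) :: 'n cvec) ` {i. \<not> Q i}"
  have "card ?B = vec.dim (coord Q)"
  proof (rule vec.basis_card_eq_dim)
    show "?B \<subseteq> coord Q" by (auto simp: coord_def axis_def)
    show "vec.independent ?B"
      by (rule vec.independent_mono[OF independent_cart_basis]) (auto simp: cart_basis_def)
    show "coord Q \<subseteq> vec.span ?B"
    proof
      fix v :: "'n cvec" assume v: "v \<in> coord Q"
      have "v = (\<Sum>i\<in>UNIV. v $ i *s axis i 1)" by (simp add: basis_expansion)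
      also have "\<dots> = (\<Sum>i\<in>{i. \<not> Q i}. v $ i *s axis i 1)"
        using v by (intro sum.mono_neutral_right) (auto simp: coord_def)
      also have "\<dots> \<in> vec.span ?B"
        by (intro vec.span_sum vec.span_scale vec.span_base) auto
      finally show "v \<in> vec.span ?B" .
    qed
  qed
  moreover have "card ?B = card {i. \<not> Q i}"
    by (rule card_image) (auto simp: inj_on_def axis_eq_axis)
  ultimately show ?thesis by simp
qed

lemma coord_UNIV: "(\<And>i. \<not> Q i) \<Longrightarrow> coord Q = UNIV"
  by (auto simp: coord_def)

definition StdP :: "('n::finite \<Rightarrow> nat) \<Rightarrow> nat \<Rightarrow> ('n cvec \<times> 'n cvec) set" where
  "StdP blk j = {p. (\<forall>i. blk i < j \<longrightarrow> fst p $ i = 0) \<and> (\<forall>i. j < blk i \<longrightarrow> snd p $ i = 0)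
      \<and> (\<forall>i. blk i = j \<longrightarrow> fst p $ i = snd p $ i)}"

lemma StdP_subspace: "pv.subspace (StdP blk j)"
  by (auto simp: pv.subspace_def StdP_def pscale_def)

lemma StdP_Dom: "DomR (StdP blk j) = coord (\<lambda>i. blk i < j)"
proof
  show "DomR (StdP blk j) \<subseteq> coord (\<lambda>i. blk i < j)" by (auto simp: DomR_def StdP_def coord_def)
  show "coord (\<lambda>i. blk i < j) \<subseteq> DomR (StdP blk j)"
  proof
    fix v assume "v \<in> coord (\<lambda>i. blk i < j)"
    then have "(v, \<chi> i. if blk i = j then v $ i else 0) \<in> StdP blk j"
      by (auto simp: StdP_def coord_def)
    then show "v \<in> DomR (StdP blk j)" unfolding DomR_def by force
  qed
qed

lemma StdP_Im: "ImR (StdP blk j) = coord (\<lambda>i. j < blk i)"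
proof
  show "ImR (StdP blk j) \<subseteq> coord (\<lambda>i. j < blk i)" by (auto simp: ImR_def StdP_def coord_def)
  show "coord (\<lambda>i. j < blk i) \<subseteq> ImR (StdP blk j)"
  proof
    fix w assume "w \<in> coord (\<lambda>i. j < blk i)"
    then have "(\<chi> i. if blk i = j then w $ i else 0, w) \<in> StdP blk j"
      by (auto simp: StdP_def coord_def)
    then show "w \<in> ImR (StdP blk j)" unfolding ImR_def by force
  qed
qed

lemma StdP_Ker: "KerR (StdP blk j) = coord (\<lambda>i. blk i \<le> j)"
  by (auto simp: KerR_def StdP_def coord_def nat_less_le)

lemma StdP_Indef: "IndefR (StdP blk j) = coord (\<lambda>i. j \<le> blk i)"
  by (auto simp: IndefR_def StdP_def coord_def nat_less_le)

lemma StdP_ndim: "ndim_subspace (StdP blk j :: ('n::finite cvec \<times> 'n cvec) set)"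
  unfolding ndim_subspace_def
  using dim_formula[OF StdP_subspace, of blk j] card_split[of "\<lambda>i. j \<le> blk i"]
  by (simp add: StdP_subspace StdP_Dom StdP_Indef dim_coord not_less not_le)

lemma StdP_rk: "rkR (StdP blk j) = card {i. blk i = j}"
proof -
  have "{i. j \<le> blk i} = {i. blk i = j} \<union> {i. j < blk i}" by auto
  moreover have "card ({i. blk i = j} \<union> {i. j < blk i}) = card {i. blk i = j} + card {i. j < blk i}"
    by (rule card_Un_disjoint) auto
  ultimately show ?thesis
    by (simp add: rkR_def StdP_Dom StdP_Ker dim_coord not_less not_le)
qed

definition StdH :: "('n::finite \<Rightarrow> nat) \<Rightarrow> nat \<Rightarrow> ('n cvec \<times> 'n cvec) set list" where
  "StdH blk k = map (StdP blk) [0..<k]"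

lemma StdH_hinge:
  assumes k: "0 < k" and blk: "\<And>i. blk i < k" and pos: "\<And>j. j < k \<Longrightarrow> 0 < card {i. blk i = j}"
  shows "is_hinge (StdH blk k)"
  unfolding is_hinge_def StdH_def
proof (intro conjI allI impI)
  show "map (StdP blk) [0..<k] \<noteq> []" using k by simp
  show "ndim_subspace (map (StdP blk) [0..<k] ! j)" if "j < length (map (StdP blk) [0..<k])" for j
    using that by (simp add: StdP_ndim del: upt_Suc)
  show "KerR (map (StdP blk) [0..<k] ! j) = DomR (map (StdP blk) [0..<k] ! (j + 1))"
    if "j + 1 < length (map (StdP blk) [0..<k])" for j
    using that by (simp add: StdP_Ker StdP_Dom less_Suc_eq_le del: upt_Suc)
  show "ImR (map (StdP blk) [0..<k] ! j) = IndefR (map (StdP blk) [0..<k] ! (j + 1))"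
    if "j + 1 < length (map (StdP blk) [0..<k])" for j
    using that by (simp add: StdP_Im StdP_Indef Suc_le_eq del: upt_Suc)
  have "hd (map (StdP blk) [0..<k]) = StdP blk 0" using k by (simp add: hd_map)
  then show "DomR (hd (map (StdP blk) [0..<k])) = UNIV"
    by (simp add: StdP_Dom coord_UNIV)
  have "last (map (StdP blk) [0..<k]) = StdP blk (k - 1)" using k by (simp add: last_map)
  moreover have "\<not> k - 1 < blk i" for i using blk[of i] by linarith
  ultimately show "ImR (last (map (StdP blk) [0..<k])) = UNIV"
    by (simp add: StdP_Im coord_UNIV)
  show "0 < rkR (map (StdP blk) [0..<k] ! j)" if "j < length (map (StdP blk) [0..<k])" for j
    using that pos by (simp add: StdP_rk)
qed

lemma StdH_rk: "map rkR (StdH blk k) = map (\<lambda>j. card {i. blk i = j}) [0..<k]"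
  by (simp add: StdH_def StdP_rk)

lemma act_act: "act g1 g2 (act h1 h2 P) = act (g1 ** h1) (g2 ** h2) P"
  unfolding act_def image_comp
  by (rule image_cong) (auto simp: matrix_vector_mul_assoc split: prod.splits)

lemma act_id: "act (mat 1) (mat 1) P = P"
  by (auto simp: act_def)

lemma act_Dom: "DomR (act g1 g2 P) = (\<lambda>v. g1 *v v) ` DomR P"
  by (force simp: act_def DomR_def image_image split: prod.splits)

lemma act_Ker:
  assumes "inj ((*v) g2)"
  shows "KerR (act g1 g2 P) = (\<lambda>v. g1 *v v) ` KerR P"
proof -
  have "g2 *v w = 0 \<longleftrightarrow> w = 0" for w
    using assms by (metis injD matrix_vector_mult_0_right)
  then show ?thesis by (force simp: act_def KerR_def)
qed

lemma dim_inj_image: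
  assumes "inj ((*v) (g :: complex^'n::finite^'n))"
  shows "vec.dim ((\<lambda>v. g *v v) ` S) = vec.dim S"
  using vec.dim_image_eq[OF matrix_vector_mul_linear_gen, of g S] assms
  by (simp add: inj_on_subset)

lemma rk_act:
  assumes "invertible g1" "invertible g2"
  shows "rkR (act g1 g2 P) = rkR P"
proof -
  have i1: "inj ((*v) g1)" and i2: "inj ((*v) g2)"
    using assms by (auto simp: invertible_eq_bij bij_def)
  show ?thesis
    unfolding rkR_def act_Dom act_Ker[OF i2] dim_inj_image[OF i1] ..
qed



definition Dseq :: "('n::finite cvec \<times> 'n cvec) set list \<Rightarrow> nat \<Rightarrow> 'n cvec set" where
  "Dseq Ps j = (if j < length Ps then DomR (Ps ! j) else {0})"

locale NF0 =
  fixes Ps :: "('n::finite cvec \<times> 'n cvec) set list"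
  assumes H: "is_hinge Ps"

context NF0
begin

lemma Hsub: "j < length Ps \<Longrightarrow> pv.subspace (Ps ! j)"
  using H by (auto simp: is_hinge_def ndim_subspace_def)

lemma Hne: "Ps \<noteq> []" using H by (simp add: is_hinge_def)

lemma D0: "Dseq Ps 0 = UNIV"
  using H Hne by (auto simp: is_hinge_def Dseq_def hd_conv_nth)

lemma DSuc: "j < length Ps \<Longrightarrow> Dseq Ps (Suc j) = KerR (Ps ! j)"
proof (cases "Suc j < length Ps")
  case True
  assume "j < length Ps"
  then show ?thesis using H True by (auto simp: is_hinge_def Dseq_def)
next
  case False
  assume j: "j < length Ps"
  have "j = length Ps - 1" using j False by simp
  then have jl: "Ps ! j = last Ps" by (simp add: last_conv_nth Hne)
  have "ndim_subspace (last Ps)" "ImR (last Ps) = UNIV" using H j jl by (auto simp: is_hinge_def)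
  then have "KerR (Ps ! j) = {0}" using Ker_zero jl by metis
  then show ?thesis using False by (simp add: Dseq_def)
qed

lemma Dsub: "vec.subspace (Dseq Ps j)"
  by (auto simp: Dseq_def Hsub subspace_Dom)

lemma DSuc_sub: "Dseq Ps (Suc j) \<subseteq> Dseq Ps j"
proof (cases "j < length Ps")
  case True
  then show ?thesis using DSuc Ker_sub_Dom by (simp add: Dseq_def)
next
  case False
  then show ?thesis by (simp add: Dseq_def)
qed

lemma Dmono: "j \<le> j' \<Longrightarrow> Dseq Ps j' \<subseteq> Dseq Ps j"
proof (induction rule: dec_induct)
  case base then show ?case by simp
next
  case (step n) then show ?case using DSuc_sub[of n] by blast
qed

lemma Drk: "j < length Ps \<Longrightarrow> rkR (Ps ! j) = vec.dim (Dseq Ps j) - vec.dim (Dseq Ps (Suc j))"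
  using DSuc by (simp add: rkR_def Dseq_def)

lemma Dk: "Dseq Ps (length Ps) = {0}"
  by (simp add: Dseq_def)

end

locale NF = NF0 Ps for Ps :: "('n::finite cvec \<times> 'n cvec) set list" +
  fixes blk :: "'n \<Rightarrow> nat"
  assumes blkk: "\<And>i. blk i < length Ps"
    and blkc: "\<And>j. j < length Ps \<Longrightarrow> card {i. blk i = j} = rkR (Ps ! j)"

context NF
begin

lemma b_exists:
  "\<exists>b. (\<forall>i. b i \<in> Dseq Ps (blk i)) \<and>
       (\<forall>j. j \<le> length Ps \<longrightarrow> Dseq Ps j \<subseteq> vec.span (b ` {i. j \<le> blk i}))"
proof -
  have main: "\<exists>b. (\<forall>i. j \<le> blk i \<longrightarrow> b i \<in> Dseq Ps (blk i)) \<and>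
       (\<forall>j'. j \<le> j' \<and> j' \<le> length Ps \<longrightarrow> Dseq Ps j' \<subseteq> vec.span (b ` {i. j' \<le> blk i}))"
    if "j \<le> length Ps" for j
    using that
  proof (induction rule: inc_induct)
    case base
    show ?case
    proof (intro exI[of _ "\<lambda>_. 0"] conjI allI impI)
      fix i assume "length Ps \<le> blk i" then show "0 \<in> Dseq Ps (blk i)" using blkk[of i] by simp
    next
      fix j' assume "length Ps \<le> j' \<and> j' \<le> length Ps" then have "j' = length Ps" by simp
      then show "Dseq Ps j' \<subseteq> vec.span ((\<lambda>_. 0) ` {i. j' \<le> blk i})" using Dk vec.span_zero by auto
    qed
  next
    case (step n)
    from step.IH obtain b where b1: "\<forall>i. Suc n \<le> blk i \<longrightarrow> b i \<in> Dseq Ps (blk i)"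
      and b2: "\<forall>j'. Suc n \<le> j' \<and> j' \<le> length Ps \<longrightarrow> Dseq Ps j' \<subseteq> vec.span (b ` {i. j' \<le> blk i})"
      by blast
    obtain B' where B': "B' \<subseteq> Dseq Ps (Suc n)" "vec.independent B'" "Dseq Ps (Suc n) \<subseteq> vec.span B'"
      "card B' = vec.dim (Dseq Ps (Suc n))"
      by (rule vec.basis_exists)
    have "B' \<subseteq> Dseq Ps n" using B'(1) DSuc_sub by blast
    then obtain B where B: "B' \<subseteq> B" "B \<subseteq> Dseq Ps n" "vec.independent B" "Dseq Ps n \<subseteq> vec.span B"
      using vec.maximal_independent_subset_extend[OF _ B'(2)] by metis
    have cB: "card B = vec.dim (Dseq Ps n)" using vec.basis_card_eq_dim[OF B(2) B(4) B(3)] .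
    have fB: "finite B" using B(3) vec.finiteI_independent by blast
    have fB': "finite B'" using B'(2) vec.finiteI_independent by blast
    define E where "E = B - B'"
    have "card E = card B - card B'" unfolding E_def using card_Diff_subset[OF fB' B(1)] .
    also have "\<dots> = rkR (Ps ! n)" using Drk[OF step.hyps(2)] cB B'(4) by simp
    also have "\<dots> = card {i. blk i = n}" using blkc[OF step.hyps(2)] by simp
    finally have cE: "card E = card {i. blk i = n}" .
    obtain h where h: "bij_betw h {i. blk i = n} E"
      using finite_same_card_bij[of "{i. blk i = n}" E] cE fB by (auto simp: E_def)
    define b' where "b' = (\<lambda>i. if blk i = n then h i else b i)"
    show ?case
    proof (intro exI[of _ b'] conjI allI impI)
      fix i assume i: "n \<le> blk i"
      show "b' i \<in> Dseq Ps (blk i)"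
      proof (cases "blk i = n")
        case True
        then have "h i \<in> E" using h by (auto simp: bij_betw_def)
        then show ?thesis using True B(2) by (auto simp: b'_def E_def)
      next
        case False
        then show ?thesis using b1 i by (auto simp: b'_def)
      qed
    next
      fix j' assume j': "n \<le> j' \<and> j' \<le> length Ps"
      show "Dseq Ps j' \<subseteq> vec.span (b' ` {i. j' \<le> blk i})"
      proof (cases "j' = n")
        case False
        then have "b' ` {i. j' \<le> blk i} = b ` {i. j' \<le> blk i}"
          using j' by (auto simp: b'_def intro!: image_cong)
        then show ?thesis using b2 j' False by auto
      next
        case True
        let ?X = "b' ` {i. n \<le> blk i}"
        have "E = h ` {i. blk i = n}" using h by (simp add: bij_betw_def)
        also have "\<dots> = b' ` {i. blk i = n}" by (auto simp: b'_def)
        also have "\<dots> \<subseteq> ?X" by auto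
        finally have EX: "E \<subseteq> ?X" .
        have "b ` {i. Suc n \<le> blk i} = b' ` {i. Suc n \<le> blk i}"
          by (auto simp: b'_def intro!: image_cong)
        also have "\<dots> \<subseteq> ?X" by auto
        finally have "vec.span (b ` {i. Suc n \<le> blk i}) \<subseteq> vec.span ?X" by (rule vec.span_mono)
        moreover have "Dseq Ps (Suc n) \<subseteq> vec.span (b ` {i. Suc n \<le> blk i})"
          using b2 step.hyps(2) by auto
        ultimately have "B' \<subseteq> vec.span ?X" using B'(1) by blast
        moreover have "E \<subseteq> vec.span ?X" using EX vec.span_superset by blast
        ultimately have "B \<subseteq> vec.span ?X" using B(1) by (auto simp: E_def)
        then have "vec.span B \<subseteq> vec.span ?X" using vec.span_minimal vec.subspace_span by blast
        then show ?thesis using B(4) True by blast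
      qed
    qed
  qed
  show ?thesis using main[of 0] by simp
qed

end



definition colmat :: "('n::finite \<Rightarrow> 'n cvec) \<Rightarrow> complex^'n^'n" where
  "colmat b = (\<chi> r s. b s $ r)"

lemma colmat_mult: "colmat b *v u = (\<Sum>s\<in>UNIV. u $ s *s b s)"
  by (simp add: matrix_mult_sum column_def colmat_def)

lemma colmat_invertible:
  assumes "vec.span (range b) = UNIV"
  shows "invertible (colmat b)"
proof -
  have "columns (colmat b) = range b"
    by (auto simp: columns_def column_def colmat_def)
  then show ?thesis
    using assms matrix_right_invertible_span_columns[of "colmat b"] invertible_right_inverse by metis
qed

lemma span_coords:
  fixes f :: "'n::finite \<Rightarrow> 'n cvec"
  assumes "inj f" "x \<in> vec.span (f ` S)"
  shows "\<exists>u. (\<forall>i. i \<notin> S \<longrightarrow> u $ i = 0) \<and> x = (\<Sum>i\<in>UNIV. u $ i *s f i)"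
proof -
  have fin: "finite (f ` S)" by simp
  obtain a where x: "x = (\<Sum>y\<in>f ` S. a y *s y)" using assms(2) vec.span_finite[OF fin] by auto
  have x2: "x = (\<Sum>i\<in>S. a (f i) *s f i)"
    using x sum.reindex[of f S "\<lambda>y. a y *s y"] inj_on_subset[OF assms(1)] by simp
  define u where "u = (\<chi> i. if i \<in> S then a (f i) else 0)"
  have "(\<Sum>i\<in>UNIV. u $ i *s f i) = (\<Sum>i\<in>UNIV. if i \<in> S then a (f i) *s f i else 0)"
    by (rule sum.cong) (auto simp: u_def)
  also have "\<dots> = (\<Sum>i\<in>S. a (f i) *s f i)"
    by (simp add: sum.inter_restrict[symmetric])
  finally show ?thesis using x2 by (intro exI[of _ u]) (auto simp: u_def)
qed

lemma inj_of_span: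
  fixes b :: "'n::finite \<Rightarrow> 'n cvec"
  assumes "vec.span (range b) = UNIV"
  shows "inj b"
proof -
  have "vec.dim (UNIV :: 'n cvec set) \<le> card (range b)"
    using vec.span_card_ge_dim[of "range b" UNIV] assms by simp
  then have "CARD('n) \<le> card (range b)" by (simp add: card_cart_basis)
  moreover have "card (range b) \<le> CARD('n)" by (rule card_image_le) simp
  ultimately show ?thesis by (intro eq_card_imp_inj_on) auto
qed

locale NFb = NF Ps blk for Ps :: "('n::finite cvec \<times> 'n cvec) set list" and blk +
  fixes b c :: "'n \<Rightarrow> 'n cvec"
  assumes bD: "\<And>i. b i \<in> Dseq Ps (blk i)"
    and bspan: "\<And>j. j \<le> length Ps \<Longrightarrow> Dseq Ps j \<subseteq> vec.span (b ` {i. j \<le> blk i})"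
    and cP: "\<And>i. (b i, c i) \<in> Ps ! (blk i)"
begin

lemma bspan_eq: "j \<le> length Ps \<Longrightarrow> Dseq Ps j = vec.span (b ` {i. j \<le> blk i})"
proof
  assume j: "j \<le> length Ps"
  show "Dseq Ps j \<subseteq> vec.span (b ` {i. j \<le> blk i})" using bspan[OF j] .
  have "b ` {i. j \<le> blk i} \<subseteq> Dseq Ps j" using bD Dmono by blast
  then show "vec.span (b ` {i. j \<le> blk i}) \<subseteq> Dseq Ps j"
    using vec.span_minimal Dsub by blast
qed

lemma b_span_UNIV: "vec.span (range b) = UNIV"
  using bspan[of 0] D0 by auto

lemma N0: "IndefR (Ps ! 0) = {0}"
proof -
  have "0 < length Ps" using Hne by simp
  then have "ndim_subspace (Ps ! 0)" "DomR (Ps ! 0) = UNIV"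
    using H D0 by (auto simp: is_hinge_def Dseq_def)
  then show ?thesis by (rule Indef_zero)
qed

lemma NSuc: "Suc j < length Ps \<Longrightarrow> IndefR (Ps ! Suc j) = ImR (Ps ! j)"
  using H by (auto simp: is_hinge_def)

lemma ImN: "m < j \<Longrightarrow> j < length Ps \<Longrightarrow> ImR (Ps ! m) \<subseteq> IndefR (Ps ! j)"
proof (induction j)
  case 0 then show ?case by simp
next
  case (Suc j)
  show ?case
  proof (cases "m = j")
    case True then show ?thesis using NSuc Suc by simp
  next
    case False
    then have "ImR (Ps ! m) \<subseteq> IndefR (Ps ! j)" using Suc by simp
    also have "\<dots> \<subseteq> ImR (Ps ! j)" by (rule Indef_sub_Im)
    finally show ?thesis using NSuc Suc by simp
  qed
qed

lemma I_of_N: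
  assumes j: "j < length Ps" and N: "IndefR (Ps ! j) \<subseteq> vec.span (c ` {i. blk i < j})"
  shows "ImR (Ps ! j) \<subseteq> vec.span (c ` {i. blk i \<le> j})"
proof
  fix w assume "w \<in> ImR (Ps ! j)"
  then obtain v where vw: "(v, w) \<in> Ps ! j" by (auto simp: ImR_def)
  have sub: "pv.subspace (Ps ! j)" using Hsub j .
  have "v \<in> Dseq Ps j" using vw j by (force simp: Dseq_def DomR_def)
  also have "\<dots> = vec.span (b ` {i. j \<le> blk i})" using bspan_eq j by simp
  also have "b ` {i. j \<le> blk i} = b ` ({i. blk i = j} \<union> {i. Suc j \<le> blk i})"
    by (rule arg_cong[where f="image b"]) auto
  finally obtain x y where v: "v = x + y" and x: "x \<in> vec.span (b ` {i. blk i = j})"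
    and y: "y \<in> vec.span (b ` {i. Suc j \<le> blk i})"
    unfolding image_Un vec.span_Un by blast
  have "y \<in> Dseq Ps (Suc j)" using y bspan_eq[of "Suc j"] j by simp
  then have y0: "(y, 0) \<in> Ps ! j" using DSuc[OF j] by (simp add: KerR_def)
  have "\<forall>x\<in>b ` {i. blk i = j}. \<exists>z\<in>vec.span (c ` {i. blk i = j}). (x, z) \<in> Ps ! j"
    using cP by (auto intro: vec.span_base)
  then obtain z where z: "z \<in> vec.span (c ` {i. blk i = j})" and xz: "(x, z) \<in> Ps ! j"
    using lift_span[OF sub _ x] by blast
  have "(v - x - y, w - z - 0) \<in> Ps ! j"
    using sub_diff[OF sub sub_diff[OF sub vw xz] y0] .
  then have "w - z \<in> IndefR (Ps ! j)" using v by (simp add: IndefR_def)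
  then have "w - z \<in> vec.span (c ` {i. blk i < j})" using N by blast
  moreover have "c ` {i. blk i < j} \<subseteq> c ` {i. blk i \<le> j}" by auto
  ultimately have a: "w - z \<in> vec.span (c ` {i. blk i \<le> j})"
    using vec.span_mono by blast
  have "c ` {i. blk i = j} \<subseteq> c ` {i. blk i \<le> j}" by auto
  then have "z \<in> vec.span (c ` {i. blk i \<le> j})"
    using z vec.span_mono by blast
  from vec.span_add[OF this a] show "w \<in> vec.span (c ` {i. blk i \<le> j})" by simp
qed

lemma Ispan: "j < length Ps \<Longrightarrow> ImR (Ps ! j) \<subseteq> vec.span (c ` {i. blk i \<le> j})
   \<and> IndefR (Ps ! j) \<subseteq> vec.span (c ` {i. blk i < j})"
proof (induction j)
  case 0
  have "IndefR (Ps ! 0) \<subseteq> vec.span (c ` {i. blk i < 0})" using N0 vec.span_zero by auto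
  then show ?case using I_of_N 0 by blast
next
  case (Suc j)
  have "IndefR (Ps ! Suc j) = ImR (Ps ! j)" using NSuc Suc by simp
  also have "\<dots> \<subseteq> vec.span (c ` {i. blk i \<le> j})" using Suc by simp
  also have "{i. blk i \<le> j} = {i. blk i < Suc j}" by auto
  finally show ?case using I_of_N Suc by blast
qed

lemma c_span_UNIV: "vec.span (range c) = UNIV"
proof -
  have l: "length Ps - 1 < length Ps" using Hne by simp
  have "ImR (Ps ! (length Ps - 1)) = UNIV"
    using H Hne by (simp add: is_hinge_def last_conv_nth)
  then have "UNIV \<subseteq> vec.span (c ` {i. blk i \<le> length Ps - 1})" using Ispan[OF l] by simp
  also have "\<dots> \<subseteq> vec.span (range c)" by (rule vec.span_mono) auto
  finally show ?thesis by auto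
qed

lemma gen_in:
  assumes j: "j < length Ps"
  shows "blk i = j \<Longrightarrow> (b i, c i) \<in> Ps ! j"
    and "j < blk i \<Longrightarrow> (b i, 0) \<in> Ps ! j"
    and "blk i < j \<Longrightarrow> (0, c i) \<in> Ps ! j"
proof -
  show "blk i = j \<Longrightarrow> (b i, c i) \<in> Ps ! j" using cP by auto
  show "(b i, 0) \<in> Ps ! j" if "j < blk i"
  proof -
    have "b i \<in> Dseq Ps (Suc j)" using bD Dmono[of "Suc j" "blk i"] that by auto
    then show ?thesis using DSuc[OF j] by (simp add: KerR_def)
  qed
  show "(0, c i) \<in> Ps ! j" if "blk i < j"
  proof -
    have "c i \<in> ImR (Ps ! blk i)" using cP by (force simp: ImR_def)
    then have "c i \<in> IndefR (Ps ! j)" using ImN[OF that j] by blast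
    then show ?thesis by (simp add: IndefR_def)
  qed
qed

lemma act_sub:
  assumes j: "j < length Ps" and p: "p \<in> StdP blk j"
  shows "(colmat b *v fst p, colmat c *v snd p) \<in> Ps ! j"
proof -
  obtain v w where pvw: "p = (v, w)" by (cases p)
  have v0: "\<And>i. blk i < j \<Longrightarrow> v $ i = 0" and w0: "\<And>i. j < blk i \<Longrightarrow> w $ i = 0"
    and vw: "\<And>i. blk i = j \<Longrightarrow> v $ i = w $ i" using p pvw by (auto simp: StdP_def)
  define gen where "gen i = (if blk i = j then (b i, c i) else if j < blk i then (b i, 0) else (0, c i))" for i
  define co where "co i = (if j \<le> blk i then v $ i else w $ i)" for i
  have f: "co i *s fst (gen i) = v $ i *s b i" for i
    using v0[of i] by (auto simp: co_def gen_def)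
  have s: "co i *s snd (gen i) = w $ i *s c i" for i
    using w0[of i] vw[of i] by (auto simp: co_def gen_def)
  have eq: "(colmat b *v v, colmat c *v w) = (\<Sum>i\<in>UNIV. pscale (co i) (gen i))"
    by (simp add: prod_eq_iff fst_sum snd_sum pscale_def colmat_mult f s)
  have "(\<Sum>i\<in>UNIV. pscale (co i) (gen i)) \<in> Ps ! j"
  proof (rule pv.subspace_sum[OF Hsub[OF j]])
    fix i
    have "gen i \<in> Ps ! j" using gen_in[OF j, of i] by (auto simp: gen_def)
    then show "pscale (co i) (gen i) \<in> Ps ! j" using pv.subspace_scale[OF Hsub[OF j]] by blast
  qed
  then show ?thesis using eq pvw by simp
qed

lemma act_eq:
  assumes j: "j < length Ps"
  shows "act (colmat b) (colmat c) (StdP blk j) = Ps ! j"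
proof
  show "act (colmat b) (colmat c) (StdP blk j) \<subseteq> Ps ! j"
    using act_sub[OF j] by (auto simp: act_def)
  show "Ps ! j \<subseteq> act (colmat b) (colmat c) (StdP blk j)"
  proof
    fix p assume p: "p \<in> Ps ! j"
    obtain v w where pvw: "p = (v, w)" by (cases p)
    have sub: "pv.subspace (Ps ! j)" using Hsub j .
    have "v \<in> Dseq Ps j" using p pvw j by (force simp: Dseq_def DomR_def)
    then have "v \<in> vec.span (b ` {i. j \<le> blk i})" using bspan_eq j by simp
    then obtain u where u0: "\<forall>i. i \<notin> {i. j \<le> blk i} \<longrightarrow> u $ i = 0"
      and vu: "v = (\<Sum>i\<in>UNIV. u $ i *s b i)"
      using span_coords[OF inj_of_span[OF b_span_UNIV]] by blast
    define u' where "u' = (\<chi> i. if blk i = j then u $ i else 0)"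
    have "(u, u') \<in> StdP blk j" using u0 by (auto simp: StdP_def u'_def)
    from act_sub[OF j this] have q: "(v, colmat c *v u') \<in> Ps ! j"
      using vu by (simp add: colmat_mult)
    have "(v - v, w - colmat c *v u') \<in> Ps ! j" using sub_diff[OF sub p[unfolded pvw] q] .
    then have "w - colmat c *v u' \<in> IndefR (Ps ! j)" by (simp add: IndefR_def)
    then have "w - colmat c *v u' \<in> vec.span (c ` {i. blk i < j})" using Ispan[OF j] by blast
    then obtain t where t0: "\<forall>i. i \<notin> {i. blk i < j} \<longrightarrow> t $ i = 0"
      and wt: "w - colmat c *v u' = (\<Sum>i\<in>UNIV. t $ i *s c i)"
      using span_coords[OF inj_of_span[OF c_span_UNIV]] by blast
    have w: "w = colmat c *v (u' + t)"
      using wt by (simp add: matrix_vector_right_distrib colmat_mult[of c t] algebra_simps)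
    have "(u, u' + t) \<in> StdP blk j" using u0 t0 by (auto simp: StdP_def u'_def)
    moreover have "p = (colmat b *v u, colmat c *v (u' + t))"
      using pvw vu w by (simp add: colmat_mult)
    ultimately show "p \<in> act (colmat b) (colmat c) (StdP blk j)"
      by (force simp: act_def)
  qed
qed

end

context NF
begin

lemma normal_form:
  "\<exists>g1 g2. invertible g1 \<and> invertible g2 \<and> Ps = map (act g1 g2) (StdH blk (length Ps))"
proof -
  obtain b where b1: "\<forall>i. b i \<in> Dseq Ps (blk i)"
    and b2: "\<forall>j. j \<le> length Ps \<longrightarrow> Dseq Ps j \<subseteq> vec.span (b ` {i. j \<le> blk i})"
    using b_exists by blast
  have "\<forall>i. \<exists>w. (b i, w) \<in> Ps ! (blk i)"
    using b1 blkk by (force simp: Dseq_def DomR_def)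
  then obtain c where c: "\<forall>i. (b i, c i) \<in> Ps ! (blk i)" by metis
  interpret NFb Ps blk b c
    by unfold_locales (use b1 b2 c in auto)
  show ?thesis
  proof (intro exI conjI)
    show "invertible (colmat b)" using colmat_invertible[OF b_span_UNIV] .
    show "invertible (colmat c)" using colmat_invertible[OF c_span_UNIV] .
    show "Ps = map (act (colmat b) (colmat c)) (StdH blk (length Ps))"
      by (rule nth_equalityI) (auto simp: StdH_def act_eq)
  qed
qed

end



lemma telesc:
  fixes f :: "nat \<Rightarrow> nat"
  assumes "\<And>j. f (Suc j) \<le> f j"
  shows "(\<Sum>j<m. f j - f (Suc j)) = f 0 - f m \<and> f m \<le> f 0"
proof (induction m)
  case 0 then show ?case by simp
next
  case (Suc m)
  then show ?case using assms[of m] by simp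
qed

context NF0
begin

lemma rank_sum: "sum_list (map rkR Ps) = CARD('n)"
proof -
  have "sum_list (map rkR Ps) = (\<Sum>j<length Ps. rkR (Ps ! j))"
    by (simp add: sum_list_sum_nth atLeast0LessThan)
  also have "\<dots> = (\<Sum>j<length Ps. vec.dim (Dseq Ps j) - vec.dim (Dseq Ps (Suc j)))"
    by (rule sum.cong) (auto simp: Drk)
  also have "\<dots> = vec.dim (Dseq Ps 0) - vec.dim (Dseq Ps (length Ps))"
    using telesc[of "\<lambda>j. vec.dim (Dseq Ps j)"] vec.dim_subset[OF DSuc_sub] by blast
  also have "\<dots> = CARD('n)" by (simp add: D0 Dk card_cart_basis)
  finally show ?thesis .
qed

lemma rank_pos: "\<forall>P\<in>set Ps. 0 < rkR P"
  using H by (auto simp: is_hinge_def in_set_conv_nth)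

lemma length_bounds: "length Ps \<in> {1..CARD('n)}"
proof -
  have "length Ps = (\<Sum>x\<leftarrow>Ps. (1::nat))" by (simp add: sum_list_triv)
  also have "\<dots> \<le> (\<Sum>x\<leftarrow>Ps. rkR x)"
    by (rule sum_list_mono) (use rank_pos in auto)
  finally show ?thesis using rank_sum Hne by (simp add: Suc_le_eq)
qed

end

definition Comp :: "nat \<Rightarrow> nat list set" where
  "Comp n = {\<alpha>. \<alpha> \<noteq> [] \<and> (\<forall>a\<in>set \<alpha>. 0 < a) \<and> sum_list \<alpha> = n}"

lemma Comp1: "Comp 1 = {[1]}"
proof
  show "Comp 1 \<subseteq> {[1]}"
  proof
    fix \<alpha> assume "\<alpha> \<in> Comp 1"
    then obtain a xs where \<alpha>: "\<alpha> = a # xs" and pos: "\<forall>x\<in>set (a # xs). 0 < x"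
      and s: "a + sum_list xs = 1"
      by (auto simp: Comp_def neq_Nil_conv)
    then have a1: "a = 1" by auto
    then have "sum_list xs = 0" using s by simp
    then have "\<forall>x\<in>set xs. x = 0" by (simp add: sum_list_eq_0_iff)
    then have "xs = []" using pos by (cases xs) auto
    then show "\<alpha> \<in> {[1]}" using \<alpha> a1 by simp
  qed
  show "{[1]} \<subseteq> Comp 1" by (auto simp: Comp_def)
qed

lemma card_Comp: "card (Comp (Suc m)) = 2 ^ m"
proof (induction m)
  case 0
  have "card (Comp 1) = 1" using Comp1 by simp
  then show ?case by simp
next
  case (Suc m)
  let ?C = "Comp (Suc m)"
  define F where "F \<beta> = Suc (hd \<beta>) # tl \<beta>" for \<beta> :: "nat list"
  have fin: "finite ?C" using Suc.IH by (metis card.infinite power_not_zero zero_neq_numeral)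
  have eq: "Comp (Suc (Suc m)) = Cons 1 ` ?C \<union> F ` ?C"
  proof
    show "Cons 1 ` ?C \<union> F ` ?C \<subseteq> Comp (Suc (Suc m))"
    proof
      fix \<alpha> assume "\<alpha> \<in> Cons 1 ` ?C \<union> F ` ?C"
      then consider \<beta> where "\<beta> \<in> ?C" "\<alpha> = 1 # \<beta>" | \<beta> where "\<beta> \<in> ?C" "\<alpha> = F \<beta>" by blast
      then show "\<alpha> \<in> Comp (Suc (Suc m))"
      proof cases
        case 1 then show ?thesis by (auto simp: Comp_def)
      next
        case 2
        then obtain x xs where "\<beta> = x # xs" by (auto simp: Comp_def neq_Nil_conv)
        then show ?thesis using 2 by (auto simp: Comp_def F_def)
      qed
    qed
    show "Comp (Suc (Suc m)) \<subseteq> Cons 1 ` ?C \<union> F ` ?C"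
    proof
      fix \<alpha> assume a: "\<alpha> \<in> Comp (Suc (Suc m))"
      then obtain x xs where \<alpha>: "\<alpha> = x # xs" and pos: "0 < x" "\<forall>y\<in>set xs. 0 < y"
        and s: "x + sum_list xs = Suc (Suc m)"
        by (auto simp: Comp_def neq_Nil_conv)
      show "\<alpha> \<in> Cons 1 ` ?C \<union> F ` ?C"
      proof (cases "x = 1")
        case True
        then have "xs \<noteq> []" using s by auto
        then have "xs \<in> ?C" using pos s True by (auto simp: Comp_def)
        then show ?thesis using \<alpha> True by blast
      next
        case False
        then obtain x' where x': "x = Suc x'" "0 < x'" using pos by (cases x) auto
        then have "x' # xs \<in> ?C" using pos s by (auto simp: Comp_def)
        moreover have "\<alpha> = F (x' # xs)" using \<alpha> x' by (simp add: F_def)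
        ultimately show ?thesis by blast
      qed
    qed
  qed
  have disj: "Cons 1 ` ?C \<inter> F ` ?C = {}"
  proof -
    have h: "hd \<beta> \<noteq> 0" if "\<beta> \<in> ?C" for \<beta>
      using that by (auto simp: Comp_def neq_Nil_conv)
    show ?thesis
    proof (rule ccontr)
      assume "Cons 1 ` ?C \<inter> F ` ?C \<noteq> {}"
      then obtain \<beta> \<beta>' where b: "\<beta> \<in> ?C" "\<beta>' \<in> ?C" "1 # \<beta> = F \<beta>'" by blast
      then have "hd \<beta>' = 0" by (simp add: F_def)
      then show False using h[OF b(2)] by blast
    qed
  qed
  have injF: "inj_on F ?C"
  proof (rule inj_onI)
    fix x y assume "x \<in> ?C" "y \<in> ?C" "F x = F y"
    then show "x = y" by (auto simp: F_def Comp_def intro: list.expand)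
  qed
  have "card (Comp (Suc (Suc m))) = card (Cons 1 ` ?C) + card (F ` ?C)"
    unfolding eq using fin disj by (simp add: card_Un_disjoint)
  also have "\<dots> = card ?C + card ?C"
    using card_image[OF injF] by (simp add: card_image)
  finally show ?case using Suc.IH by simp
qed

lemma blk_exists:
  "finite S \<Longrightarrow> sum_list \<alpha> = card S \<Longrightarrow>
    \<exists>f. (\<forall>x\<in>S. f x < length \<alpha>) \<and> (\<forall>j<length \<alpha>. card {x\<in>S. f x = j} = \<alpha> ! j)"
proof (induction \<alpha> arbitrary: S)
  case Nil then show ?case by simp
next
  case (Cons a \<beta>)
  obtain A where A: "A \<subseteq> S" "card A = a" "finite A"
    using obtain_subset_with_card_n[of a S] Cons.prems by auto
  have "finite (S - A)" "sum_list \<beta> = card (S - A)"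
    using Cons.prems A by (auto simp: card_Diff_subset)
  then obtain g where g1: "\<forall>x\<in>S - A. g x < length \<beta>"
    and g2: "\<forall>j<length \<beta>. card {x\<in>S - A. g x = j} = \<beta> ! j"
    using Cons.IH by blast
  define f where "f x = (if x \<in> A then 0 else Suc (g x))" for x
  show ?case
  proof (intro exI[of _ f] conjI ballI allI impI)
    fix x assume "x \<in> S" then show "f x < length (a # \<beta>)" using g1 by (auto simp: f_def)
  next
    fix j assume j: "j < length (a # \<beta>)"
    show "card {x\<in>S. f x = j} = (a # \<beta>) ! j"
    proof (cases j)
      case 0
      have "{x\<in>S. f x = j} = A" using A(1) 0 by (auto simp: f_def)
      then show ?thesis using A 0 by simp
    next
      case (Suc j')
      have "{x\<in>S. f x = j} = {x\<in>S - A. g x = j'}" using Suc by (auto simp: f_def)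
      then show ?thesis using g2 Suc j by simp
    qed
  qed
qed

definition blkOf :: "nat list \<Rightarrow> 'n::finite \<Rightarrow> nat" where
  "blkOf \<alpha> = (SOME f. (\<forall>x. f x < length \<alpha>) \<and> (\<forall>j<length \<alpha>. card {x. f x = j} = \<alpha> ! j))"

lemma blkOf:
  assumes "sum_list \<alpha> = CARD('n::finite)"
  shows "\<forall>x. (blkOf \<alpha> :: 'n \<Rightarrow> nat) x < length \<alpha>"
    and "\<forall>j<length \<alpha>. card {x. (blkOf \<alpha> :: 'n \<Rightarrow> nat) x = j} = \<alpha> ! j"
proof -
  obtain f :: "'n \<Rightarrow> nat" where "(\<forall>x. f x < length \<alpha>) \<and> (\<forall>j<length \<alpha>. card {x. f x = j} = \<alpha> ! j)"
    using blk_exists[of "UNIV :: 'n set" \<alpha>] assms by auto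
  then have "(\<forall>x. (blkOf \<alpha> :: 'n \<Rightarrow> nat) x < length \<alpha>) \<and>
      (\<forall>j<length \<alpha>. card {x. (blkOf \<alpha> :: 'n \<Rightarrow> nat) x = j} = \<alpha> ! j)"
    unfolding blkOf_def
    by (rule someI[where P = "\<lambda>f :: 'n \<Rightarrow> nat. (\<forall>x. f x < length \<alpha>) \<and> (\<forall>j<length \<alpha>. card {x. f x = j} = \<alpha> ! j)"])
  then show "\<forall>x. (blkOf \<alpha> :: 'n \<Rightarrow> nat) x < length \<alpha>"
    and "\<forall>j<length \<alpha>. card {x. (blkOf \<alpha> :: 'n \<Rightarrow> nat) x = j} = \<alpha> ! j" by auto
qed

definition std :: "nat list \<Rightarrow> ('n::finite cvec \<times> 'n cvec) set list" where
  "std \<alpha> = StdH (blkOf \<alpha>) (length \<alpha>)"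

lemma std_props:
  assumes "\<alpha> \<in> Comp CARD('n::finite)"
  shows "is_hinge (std \<alpha> :: ('n cvec \<times> 'n cvec) set list)" and "map rkR (std \<alpha> :: ('n cvec \<times> 'n cvec) set list) = \<alpha>"
proof -
  have s: "sum_list \<alpha> = CARD('n)" and ne: "\<alpha> \<noteq> []" and pos: "\<forall>a\<in>set \<alpha>. 0 < a"
    using assms by (auto simp: Comp_def)
  note b = blkOf[OF s]
  show "is_hinge (std \<alpha> :: ('n cvec \<times> 'n cvec) set list)"
    unfolding std_def
    by (rule StdH_hinge) (use ne b pos in \<open>auto simp: nth_mem\<close>)
  show "map rkR (std \<alpha> :: ('n cvec \<times> 'n cvec) set list) = \<alpha>"
    unfolding std_def StdH_rk by (rule nth_equalityI) (use b in auto)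
qed

lemma invertible_one: "invertible (mat 1 :: complex^'n::finite^'n)"
  unfolding invertible_def by (rule exI[of _ "mat 1"]) simp

lemma self_orbit: "Ps \<in> hinge_orbit Ps"
proof -
  have e: "map (act (mat 1) (mat 1)) Ps = Ps" by (rule map_idI) (rule act_id)
  show ?thesis unfolding hinge_orbit_def using invertible_one e[symmetric] by blast
qed

lemma orbit_ranks: "Qs \<in> hinge_orbit Ps \<Longrightarrow> map rkR Qs = map rkR Ps"
  unfolding hinge_orbit_def by (auto simp: rk_act)

lemma orbit_map:
  assumes g1: "invertible g1" and g2: "invertible g2"
  shows "hinge_orbit (map (act g1 g2) S) = hinge_orbit S"
proof
  show "hinge_orbit (map (act g1 g2) S) \<subseteq> hinge_orbit S"
  proof
    fix X assume "X \<in> hinge_orbit (map (act g1 g2) S)"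
    then obtain h1 h2 where X: "X = map (act h1 h2) (map (act g1 g2) S)" "invertible h1" "invertible h2"
      by (auto simp: hinge_orbit_def)
    have "X = map (act (h1 ** g1) (h2 ** g2)) S" using X by (simp add: act_act comp_def)
    moreover have "invertible (h1 ** g1)" "invertible (h2 ** g2)"
      using X assms invertible_mult by blast+
    ultimately show "X \<in> hinge_orbit S" unfolding hinge_orbit_def by blast
  qed
  obtain g1' where a1: "g1 ** g1' = mat 1" "g1' ** g1 = mat 1" using g1 invertible_def by blast
  obtain g2' where a2: "g2 ** g2' = mat 1" "g2' ** g2 = mat 1" using g2 invertible_def by blast
  have i1: "invertible g1'" "invertible g2'" using a1 a2 invertible_def by blast+
  show "hinge_orbit S \<subseteq> hinge_orbit (map (act g1 g2) S)"
  proof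
    fix X assume "X \<in> hinge_orbit S"
    then obtain h1 h2 where X: "X = map (act h1 h2) S" "invertible h1" "invertible h2"
      by (auto simp: hinge_orbit_def)
    have "X = map (act (h1 ** g1') (h2 ** g2')) (map (act g1 g2) S)"
      using X a1 a2 by (simp add: act_act matrix_mul_assoc[symmetric])
    moreover have "invertible (h1 ** g1')" "invertible (h2 ** g2')"
      using X i1 invertible_mult by blast+
    ultimately show "X \<in> hinge_orbit (map (act g1 g2) S)"
      unfolding hinge_orbit_def by blast
  qed
qed

lemma orbit_std:
  assumes H: "is_hinge (Ps :: ('n::finite cvec \<times> 'n cvec) set list)"
  shows "hinge_orbit Ps = hinge_orbit (std (map rkR Ps))"
proof -
  interpret NF0 Ps by unfold_locales (rule H)
  let ?\<alpha> = "map rkR Ps"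
  have s: "sum_list ?\<alpha> = CARD('n)" by (rule rank_sum)
  note b = blkOf[OF s]
  interpret NF Ps "blkOf ?\<alpha>"
    by unfold_locales (use b in auto)
  obtain g1 g2 where i1: "invertible g1" and i2: "invertible g2"
    and eq: "Ps = map (act g1 g2) (StdH (blkOf ?\<alpha>) (length Ps))"
    using normal_form by blast
  have "hinge_orbit Ps = hinge_orbit (map (act g1 g2) (StdH (blkOf ?\<alpha>) (length Ps)))"
    using eq by (rule arg_cong)
  also have "\<dots> = hinge_orbit (StdH (blkOf ?\<alpha>) (length Ps))" by (rule orbit_map[OF i1 i2])
  finally show ?thesis by (simp add: std_def)
qed

lemma hinge_Comp:
  assumes H: "is_hinge (Ps :: ('n::finite cvec \<times> 'n cvec) set list)"
  shows "map rkR Ps \<in> Comp CARD('n)"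
proof -
  interpret NF0 Ps by unfold_locales (rule H)
  show ?thesis using rank_sum rank_pos Hne by (auto simp: Comp_def)
qed

theorem lemma2p3:
  shows "card (hinge_orbit ` (Hinge :: ('n::finite cvec \<times> 'n cvec) set list set))
           = 2 ^ (CARD('n) - 1)
    \<and> (\<forall>Ps \<in> (Hinge :: ('n cvec \<times> 'n cvec) set list set).
          length Ps \<in> {1..CARD('n)} \<and> (\<forall>P \<in> set Ps. rkR P > 0)
          \<and> sum_list (map rkR Ps) = CARD('n))
    \<and> (\<forall>Ps \<in> (Hinge :: ('n cvec \<times> 'n cvec) set list set). \<forall>Qs \<in> Hinge.
          Qs \<in> hinge_orbit Ps \<longleftrightarrow> map rkR Ps = map rkR Qs)
    \<and> (\<forall>\<alpha> :: nat list. \<alpha> \<noteq> [] \<and> (\<forall>a \<in> set \<alpha>. a > 0) \<and> sum_list \<alpha> = CARD('n)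
          \<longrightarrow> (\<exists>Ps \<in> (Hinge :: ('n cvec \<times> 'n cvec) set list set). map rkR Ps = \<alpha>))"
proof (intro conjI ballI allI impI)
  let ?std = "std :: nat list \<Rightarrow> ('n cvec \<times> 'n cvec) set list"
  have img: "hinge_orbit ` (Hinge :: ('n cvec \<times> 'n cvec) set list set)
      = (\<lambda>\<alpha>. hinge_orbit (?std \<alpha>)) ` Comp CARD('n)"
  proof
    show "hinge_orbit ` (Hinge :: ('n cvec \<times> 'n cvec) set list set) \<subseteq> (\<lambda>\<alpha>. hinge_orbit (?std \<alpha>)) ` Comp CARD('n)"
      using orbit_std hinge_Comp by (fastforce simp: Hinge_def)
    show "(\<lambda>\<alpha>. hinge_orbit (?std \<alpha>)) ` Comp CARD('n) \<subseteq> hinge_orbit ` (Hinge :: ('n cvec \<times> 'n cvec) set list set)"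
      using std_props(1) by (auto simp: Hinge_def)
  qed
  have inj: "inj_on (\<lambda>\<alpha>. hinge_orbit (?std \<alpha>)) (Comp CARD('n))"
  proof (rule inj_onI)
    fix \<alpha> \<beta> assume a: "\<alpha> \<in> Comp CARD('n)" and b: "\<beta> \<in> Comp CARD('n)"
      and e: "hinge_orbit (?std \<alpha>) = hinge_orbit (?std \<beta>)"
    have "?std \<beta> \<in> hinge_orbit (?std \<alpha>)" using e self_orbit by metis
    then have "map rkR (?std \<beta>) = map rkR (?std \<alpha>)" by (rule orbit_ranks)
    then show "\<alpha> = \<beta>" using std_props(2)[OF a] std_props(2)[OF b] by simp
  qed
  have "CARD('n) = Suc (CARD('n) - 1)" by simp
  then have "card (Comp CARD('n)) = 2 ^ (CARD('n) - 1)" by (metis card_Comp)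
  then show "card (hinge_orbit ` (Hinge :: ('n cvec \<times> 'n cvec) set list set)) = 2 ^ (CARD('n) - 1)"
    using card_image[OF inj] img by simp
next
  fix Ps :: "('n cvec \<times> 'n cvec) set list" assume "Ps \<in> Hinge"
  then interpret NF0 Ps by unfold_locales (simp add: Hinge_def)
  show "length Ps \<in> {1..CARD('n)}" by (rule length_bounds)
  show "0 < rkR P" if "P \<in> set Ps" for P using rank_pos that by blast
  show "sum_list (map rkR Ps) = CARD('n)" by (rule rank_sum)
next
  fix Ps Qs :: "('n cvec \<times> 'n cvec) set list" assume P: "Ps \<in> Hinge" and Q: "Qs \<in> Hinge"
  show "Qs \<in> hinge_orbit Ps \<longleftrightarrow> map rkR Ps = map rkR Qs"
  proof
    assume "Qs \<in> hinge_orbit Ps" then show "map rkR Ps = map rkR Qs" using orbit_ranks by metis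
  next
    assume e: "map rkR Ps = map rkR Qs"
    have "hinge_orbit Ps = hinge_orbit Qs"
      using orbit_std[of Ps] orbit_std[of Qs] P Q e by (simp add: Hinge_def)
    then show "Qs \<in> hinge_orbit Ps" using self_orbit by metis
  qed
next
  fix \<alpha> :: "nat list" assume "\<alpha> \<noteq> [] \<and> (\<forall>a\<in>set \<alpha>. 0 < a) \<and> sum_list \<alpha> = CARD('n)"
  then have a: "\<alpha> \<in> Comp CARD('n)" by (simp add: Comp_def)
  show "\<exists>Ps\<in>(Hinge :: ('n cvec \<times> 'n cvec) set list set). map rkR Ps = \<alpha>"
    using std_props[OF a] by (auto simp: Hinge_def)
qed


end
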